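(* Let $\mathcal D[t]\subset\mathcal H\subset\mathcal D^\times[t^\times]$ be a rigged Hilbert space with $\mathcal D[t]$ a reflexive Fréchet space, $(X,\mu)$ a $\sigma$-finite measure space, $\omega:X\to\mathcal D^\times$ a Riesz distribution basis and $\theta$ its dual. For measurable $m:X\to\mathbb C$ write $M_m:=M_{m,\omega,\theta}$. If $m_1,m_2$ are measurable functions with $M_{m_1},M_{m_2}\in\mathcal L^\dagger(\mathcal D)$, then for every $f\in\mathcal D$ one has $f\in D(M_{m_1m_2})$ and $M_{m_1}M_{m_2}f=M_{m_1m_2}f$.
   Context: Rigged Hilbert space: $\mathcal D$ dense subspace of Hilbert space $\mathcal H$ with a locally convex topology finer than the norm topology, $\mathcal D^\times$ its conjugate dual with strong dual topology, $\mathcal H\subset\mathcal D^\times$, pairing extending the inner product, $\langle f,F\rangle:=\overline{\langle F,f\rangle}$. Weakly measurable map $\omega:X\to\mathcal D^\times$: $x\mapsto\langle f,\omega_x\rangle$ measurable for all $f\in\mathcal D$. Distribution frame: there are $A,B>0$ with $A\|f\|^2\le\int_X|\langle f,\omega_x\rangle|^2d\mu\le B\|f\|^2$ for $f\in\mathcal D$. $\omega$ is $\mu$-independent if the only measurable $\xi$ with $\int_X\xi(x)\langle g,\omega_x\rangle d\mu=0$ for all $g\in\mathcal D$ is $\xi=0$ a.e. A Riesz distribution basis is a $\mu$-independent distribution frame; its dual $\theta:X\to\mathcal D^\times$ is the unique distribution frame with $\langle f,g\rangle=\int_X\langle f,\theta_x\rangle\langle\omega_x,g\rangle d\mu$ for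 all $f,g\in\mathcal D$ (it is also a Riesz distribution basis and $\omega$ is its dual). Distribution multiplier $M_{m,\omega,\theta}$: domain is the set of $f\in\mathcal D$ such that $\int_X m(x)\langle f,\omega_x\rangle\langle\theta_x,g\rangle d\mu$ converges for all $g\in\mathcal D$ and is bounded in $g$ w.r.t. the $\mathcal H$-norm; $M_{m,\omega,\theta}f\in\mathcal H$ is its Riesz representative. $\mathcal L^\dagger(\mathcal D)$ is the set of closable operators $A$ in $\mathcal H$ with $D(A)=\mathcal D$, $D(A^* )\supseteq\mathcal D$, and $A\mathcal D\subseteq\mathcal D$, $A^*\mathcal D\subseteq\mathcal D$. *)

theory Defs
  imports "HOL-Probability.Probability"
begin

section \<open>Complex Hilbert space H, given by an abelian group 'h, a complex scalar
  multiplication sc and an inner product ip (linear in the first argument)\<close>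

definition hnorm :: "('h \<Rightarrow> 'h \<Rightarrow> complex) \<Rightarrow> 'h \<Rightarrow> real" where
  "hnorm ip x = sqrt (Re (ip x x))"

definition complex_hilbert ::
  "(complex \<Rightarrow> 'h::ab_group_add \<Rightarrow> 'h) \<Rightarrow> ('h \<Rightarrow> 'h \<Rightarrow> complex) \<Rightarrow> bool" where
  "complex_hilbert sc ip \<longleftrightarrow>
     (\<forall>x. sc 1 x = x) \<and>
     (\<forall>a b x. sc a (sc b x) = sc (a * b) x) \<and>
     (\<forall>a x y. sc a (x + y) = sc a x + sc a y) \<and>
     (\<forall>a b x. sc (a + b) x = sc a x + sc b x) \<and>
     (\<forall>x y z. ip (x + y) z = ip x z + ip y z) \<and>
     (\<forall>a x y. ip (sc a x) y = a * ip x y) \<and>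
     (\<forall>x y. ip y x = cnj (ip x y)) \<and>
     (\<forall>x. Im (ip x x) = 0 \<and> Re (ip x x) \<ge> 0) \<and>
     (\<forall>x. ip x x = 0 \<longrightarrow> x = 0) \<and>
     (\<forall>u::nat \<Rightarrow> 'h. (\<forall>e>0. \<exists>N. \<forall>i\<ge>N. \<forall>j\<ge>N. hnorm ip (u i - u j) < e)
          \<longrightarrow> (\<exists>l. (\<lambda>i. hnorm ip (u i - l)) \<longlonglongrightarrow> 0))"

section \<open>The space D[t]: a Frechet space whose topology is given by a countable
  family of seminorms p n\<close>

definition pbound :: "(nat \<Rightarrow> 'h \<Rightarrow> real) \<Rightarrow> nat \<Rightarrow> 'h \<Rightarrow> real" where
  "pbound p N x = (\<Sum>n\<le>N. p n x)"

definition frechet_seminorms ::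
  "(complex \<Rightarrow> 'h::ab_group_add \<Rightarrow> 'h) \<Rightarrow> 'h set \<Rightarrow> (nat \<Rightarrow> 'h \<Rightarrow> real) \<Rightarrow> bool" where
  "frechet_seminorms sc D p \<longleftrightarrow>
     (\<forall>n. \<forall>x\<in>D. p n x \<ge> 0) \<and>
     (\<forall>n. \<forall>x\<in>D. \<forall>y\<in>D. p n (x + y) \<le> p n x + p n y) \<and>
     (\<forall>n a. \<forall>x\<in>D. p n (sc a x) = cmod a * p n x) \<and>
     (\<forall>x\<in>D. (\<forall>n. p n x = 0) \<longrightarrow> x = 0) \<and>
     (\<forall>u::nat \<Rightarrow> 'h. (\<forall>i. u i \<in> D) \<and>
          (\<forall>n. \<forall>e>0. \<exists>N. \<forall>i\<ge>N. \<forall>j\<ge>N. p n (u i - u j) < e)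
          \<longrightarrow> (\<exists>l\<in>D. \<forall>n. (\<lambda>i. p n (u i - l)) \<longlonglongrightarrow> 0))"

text \<open>Continuous linear functionals on D[t] (the dual D').  An element F of the conjugate
  dual is represented by the linear functional f \<mapsto> <f,F>.\<close>

definition dual_space ::
  "(complex \<Rightarrow> 'h::ab_group_add \<Rightarrow> 'h) \<Rightarrow> 'h set \<Rightarrow> (nat \<Rightarrow> 'h \<Rightarrow> real) \<Rightarrow> ('h \<Rightarrow> complex) set" where
  "dual_space sc D p =
     {\<Phi>. (\<forall>x\<in>D. \<forall>y\<in>D. \<Phi> (x + y) = \<Phi> x + \<Phi> y) \<and>
          (\<forall>a. \<forall>x\<in>D. \<Phi> (sc a x) = a * \<Phi> x) \<and>
          (\<exists>N C. \<forall>x\<in>D. cmod (\<Phi> x) \<le> C * pbound p N x)}"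

definition bounded_in :: "'h set \<Rightarrow> (nat \<Rightarrow> 'h \<Rightarrow> real) \<Rightarrow> 'h set \<Rightarrow> bool" where
  "bounded_in D p B \<longleftrightarrow> B \<subseteq> D \<and> (\<forall>n. \<exists>C. \<forall>f\<in>B. p n f \<le> C)"

definition strongly_bounded ::
  "(complex \<Rightarrow> 'h::ab_group_add \<Rightarrow> 'h) \<Rightarrow> 'h set \<Rightarrow> (nat \<Rightarrow> 'h \<Rightarrow> real) \<Rightarrow> ('h \<Rightarrow> complex) set \<Rightarrow> bool" where
  "strongly_bounded sc D p A \<longleftrightarrow> A \<subseteq> dual_space sc D p \<and>
     (\<forall>B. bounded_in D p B \<longrightarrow> (\<exists>C. \<forall>\<Phi>\<in>A. \<forall>f\<in>B. cmod (\<Phi> f) \<le> C))"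

definition strong_bidual ::
  "(complex \<Rightarrow> 'h::ab_group_add \<Rightarrow> 'h) \<Rightarrow> 'h set \<Rightarrow> (nat \<Rightarrow> 'h \<Rightarrow> real) \<Rightarrow> (('h \<Rightarrow> complex) \<Rightarrow> complex) set" where
  "strong_bidual sc D p =
     {\<Psi>. (\<forall>\<Phi>1\<in>dual_space sc D p. \<forall>\<Phi>2\<in>dual_space sc D p.
            \<Psi> (\<lambda>f. \<Phi>1 f + \<Phi>2 f) = \<Psi> \<Phi>1 + \<Psi> \<Phi>2) \<and>
         (\<forall>a. \<forall>\<Phi>\<in>dual_space sc D p. \<Psi> (\<lambda>f. a * \<Phi> f) = a * \<Psi> \<Phi>) \<and>
         (\<exists>B C. bounded_in D p B \<and>
            (\<forall>\<Phi>\<in>dual_space sc D p. \<forall>r. (\<forall>f\<in>B. cmod (\<Phi> f) \<le> r) \<longrightarrow> cmod (\<Psi> \<Phi>) \<le> C * r))}"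

text \<open>Reflexivity: the canonical map D \<rightarrow> D'' (f \<mapsto> evaluation at f) is onto the strong
  bidual and a topological isomorphism onto it (the strong bidual topology restricted to
  D is given by the seminorms f \<mapsto> sup over A of |F f|, A strongly bounded).\<close>

definition reflexive_space ::
  "(complex \<Rightarrow> 'h::ab_group_add \<Rightarrow> 'h) \<Rightarrow> 'h set \<Rightarrow> (nat \<Rightarrow> 'h \<Rightarrow> real) \<Rightarrow> bool" where
  "reflexive_space sc D p \<longleftrightarrow>
     (\<forall>\<Psi>\<in>strong_bidual sc D p. \<exists>g\<in>D. \<forall>\<Phi>\<in>dual_space sc D p. \<Psi> \<Phi> = \<Phi> g) \<and>
     (\<forall>n. \<exists>A C. strongly_bounded sc D p A \<and>
          (\<forall>f\<in>D. \<forall>r. (\<forall>\<Phi>\<in>A. cmod (\<Phi> f) \<le> r) \<longrightarrow> p n f \<le> C * r)) \<and>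
     (\<forall>A. strongly_bounded sc D p A \<longrightarrow>
          (\<exists>N C. \<forall>\<Phi>\<in>A. \<forall>f\<in>D. cmod (\<Phi> f) \<le> C * pbound p N f))"

text \<open>Rigged Hilbert space D[t] \<subset> H \<subset> D^\<times> with D[t] a reflexive Frechet space:
  D is a dense subspace of H and its topology is finer than the norm topology.\<close>

definition rigged_reflexive_frechet ::
  "(complex \<Rightarrow> 'h::ab_group_add \<Rightarrow> 'h) \<Rightarrow> ('h \<Rightarrow> 'h \<Rightarrow> complex) \<Rightarrow> 'h set \<Rightarrow> (nat \<Rightarrow> 'h \<Rightarrow> real) \<Rightarrow> bool" where
  "rigged_reflexive_frechet sc ip D p \<longleftrightarrow>
     complex_hilbert sc ip \<and>
     0 \<in> D \<and> (\<forall>x\<in>D. \<forall>y\<in>D. x + y \<in> D) \<and> (\<forall>a. \<forall>x\<in>D. sc a x \<in> D) \<and>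
     (\<forall>x. \<forall>e>0. \<exists>d\<in>D. hnorm ip (x - d) < e) \<and>
     frechet_seminorms sc D p \<and>
     (\<exists>N C. \<forall>x\<in>D. hnorm ip x \<le> C * pbound p N x) \<and>
     reflexive_space sc D p"

section \<open>Distribution frames, Riesz distribution bases, duals.
  A map \<omega> : X \<rightarrow> D^\<times> is represented by om with om x f = <f, \<omega>_x>.\<close>

definition weakly_meas ::
  "(complex \<Rightarrow> 'h::ab_group_add \<Rightarrow> 'h) \<Rightarrow> 'h set \<Rightarrow> (nat \<Rightarrow> 'h \<Rightarrow> real) \<Rightarrow> 'x measure \<Rightarrow> ('x \<Rightarrow> 'h \<Rightarrow> complex) \<Rightarrow> bool" where
  "weakly_meas sc D p M om \<longleftrightarrow>
     (\<forall>x\<in>space M. om x \<in> dual_space sc D p) \<and>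
     (\<forall>f\<in>D. (\<lambda>x. om x f) \<in> borel_measurable M)"

definition distribution_frame ::
  "(complex \<Rightarrow> 'h::ab_group_add \<Rightarrow> 'h) \<Rightarrow> ('h \<Rightarrow> 'h \<Rightarrow> complex) \<Rightarrow> 'h set \<Rightarrow> (nat \<Rightarrow> 'h \<Rightarrow> real)
    \<Rightarrow> 'x measure \<Rightarrow> ('x \<Rightarrow> 'h \<Rightarrow> complex) \<Rightarrow> bool" where
  "distribution_frame sc ip D p M om \<longleftrightarrow>
     weakly_meas sc D p M om \<and>
     (\<exists>A B. A > 0 \<and> B > 0 \<and> (\<forall>f\<in>D.
        ennreal (A * (hnorm ip f)\<^sup>2) \<le> (\<integral>\<^sup>+ x. ennreal ((cmod (om x f))\<^sup>2) \<partial>M) \<and>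
        (\<integral>\<^sup>+ x. ennreal ((cmod (om x f))\<^sup>2) \<partial>M) \<le> ennreal (B * (hnorm ip f)\<^sup>2)))"

definition mu_independent ::
  "'h set \<Rightarrow> 'x measure \<Rightarrow> ('x \<Rightarrow> 'h \<Rightarrow> complex) \<Rightarrow> bool" where
  "mu_independent D M om \<longleftrightarrow>
     (\<forall>\<xi>::'x \<Rightarrow> complex. \<xi> \<in> borel_measurable M \<and>
        (\<forall>g\<in>D. integrable M (\<lambda>x. \<xi> x * om x g) \<and> (LINT x|M. \<xi> x * om x g) = 0)
        \<longrightarrow> (AE x in M. \<xi> x = 0))"

definition riesz_distribution_basis ::
  "(complex \<Rightarrow> 'h::ab_group_add \<Rightarrow> 'h) \<Rightarrow> ('h \<Rightarrow> 'h \<Rightarrow> complex) \<Rightarrow> 'h set \<Rightarrow> (nat \<Rightarrow> 'h \<Rightarrow> real)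
    \<Rightarrow> 'x measure \<Rightarrow> ('x \<Rightarrow> 'h \<Rightarrow> complex) \<Rightarrow> bool" where
  "riesz_distribution_basis sc ip D p M om \<longleftrightarrow>
     distribution_frame sc ip D p M om \<and> mu_independent D M om"

text \<open>th is the dual of om: a distribution frame with
  <f,g> = \<integral> <f,\<theta>_x><\<omega>_x,g> d\<mu>, where <\<omega>_x,g> = cnj <g,\<omega>_x>.\<close>

definition dual_frame ::
  "(complex \<Rightarrow> 'h::ab_group_add \<Rightarrow> 'h) \<Rightarrow> ('h \<Rightarrow> 'h \<Rightarrow> complex) \<Rightarrow> 'h set \<Rightarrow> (nat \<Rightarrow> 'h \<Rightarrow> real)
    \<Rightarrow> 'x measure \<Rightarrow> ('x \<Rightarrow> 'h \<Rightarrow> complex) \<Rightarrow> ('x \<Rightarrow> 'h \<Rightarrow> complex) \<Rightarrow> bool" where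
  "dual_frame sc ip D p M om th \<longleftrightarrow>
     distribution_frame sc ip D p M th \<and>
     (\<forall>f\<in>D. \<forall>g\<in>D. integrable M (\<lambda>x. th x f * cnj (om x g)) \<and>
        ip f g = (LINT x|M. th x f * cnj (om x g)))"

definition mult_dom ::
  "('h \<Rightarrow> 'h \<Rightarrow> complex) \<Rightarrow> 'h set \<Rightarrow> 'x measure \<Rightarrow> ('x \<Rightarrow> complex)
    \<Rightarrow> ('x \<Rightarrow> 'h \<Rightarrow> complex) \<Rightarrow> ('x \<Rightarrow> 'h \<Rightarrow> complex) \<Rightarrow> 'h set" where
  "mult_dom ip D M m om th =
     {f\<in>D. (\<forall>g\<in>D. integrable M (\<lambda>x. m x * om x f * cnj (th x g))) \<and>
           (\<exists>C. \<forall>g\<in>D. cmod (LINT x|M. m x * om x f * cnj (th x g)) \<le> C * hnorm ip g)}"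

definition mult_op ::
  "('h \<Rightarrow> 'h \<Rightarrow> complex) \<Rightarrow> 'h set \<Rightarrow> 'x measure \<Rightarrow> ('x \<Rightarrow> complex)
    \<Rightarrow> ('x \<Rightarrow> 'h \<Rightarrow> complex) \<Rightarrow> ('x \<Rightarrow> 'h \<Rightarrow> complex) \<Rightarrow> 'h \<Rightarrow> 'h" where
  "mult_op ip D M m om th f =
     (THE h. \<forall>g\<in>D. ip h g = (LINT x|M. m x * om x f * cnj (th x g)))"

definition closable_op :: "('h::ab_group_add \<Rightarrow> 'h \<Rightarrow> complex) \<Rightarrow> 'h set \<Rightarrow> ('h \<Rightarrow> 'h) \<Rightarrow> bool" where
  "closable_op ip Adom A \<longleftrightarrow>
     (\<forall>(u::nat \<Rightarrow> 'h) y. (\<forall>n. u n \<in> Adom) \<and> (\<lambda>n. hnorm ip (u n)) \<longlonglongrightarrow> 0 \<and>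
        (\<lambda>n. hnorm ip (A (u n) - y)) \<longlonglongrightarrow> 0 \<longrightarrow> y = 0)"

definition adjoint_dom :: "('h \<Rightarrow> 'h \<Rightarrow> complex) \<Rightarrow> 'h set \<Rightarrow> ('h \<Rightarrow> 'h) \<Rightarrow> 'h set" where
  "adjoint_dom ip Adom A = {y. \<exists>z. \<forall>x\<in>Adom. ip (A x) y = ip x z}"

definition adjoint_op :: "('h \<Rightarrow> 'h \<Rightarrow> complex) \<Rightarrow> 'h set \<Rightarrow> ('h \<Rightarrow> 'h) \<Rightarrow> 'h \<Rightarrow> 'h" where
  "adjoint_op ip Adom A y = (THE z. \<forall>x\<in>Adom. ip (A x) y = ip x z)"

definition in_Ldagger :: "('h::ab_group_add \<Rightarrow> 'h \<Rightarrow> complex) \<Rightarrow> 'h set \<Rightarrow> 'h set \<Rightarrow> ('h \<Rightarrow> 'h) \<Rightarrow> bool" where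
  "in_Ldagger ip D Adom A \<longleftrightarrow>
     closable_op ip Adom A \<and> Adom = D \<and> D \<subseteq> adjoint_dom ip Adom A \<and>
     (\<forall>f\<in>D. A f \<in> D) \<and> (\<forall>f\<in>D. adjoint_op ip Adom A f \<in> D)"

end

theory Submission
  imports Defs
begin

locale chs =
  fixes sc :: "complex \<Rightarrow> 'h::ab_group_add \<Rightarrow> 'h" and ip :: "'h \<Rightarrow> 'h \<Rightarrow> complex"
  assumes H: "complex_hilbert sc ip"
begin

lemma HH: "(\<forall>x. sc 1 x = x) \<and>
     (\<forall>a b x. sc a (sc b x) = sc (a * b) x) \<and>
     (\<forall>a x y. sc a (x + y) = sc a x + sc a y) \<and>
     (\<forall>a b x. sc (a + b) x = sc a x + sc b x) \<and>
     (\<forall>x y z. ip (x + y) z = ip x z + ip y z) \<and>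
     (\<forall>a x y. ip (sc a x) y = a * ip x y) \<and>
     (\<forall>x y. ip y x = cnj (ip x y)) \<and>
     (\<forall>x. Im (ip x x) = 0 \<and> Re (ip x x) \<ge> 0) \<and>
     (\<forall>x. ip x x = 0 \<longrightarrow> x = 0)"
  using H unfolding complex_hilbert_def by (elim conjE) (intro conjI)
lemma sc1: "sc 1 x = x" by (rule HH[THEN conjunct1, rule_format])
lemma scsc: "sc a (sc b x) = sc (a * b) x" by (rule HH[THEN conjunct2, THEN conjunct1, rule_format])
lemma sc_addr: "sc a (x + y) = sc a x + sc a y" by (rule HH[THEN conjunct2, THEN conjunct2, THEN conjunct1, rule_format])
lemma sc_addl: "sc (a + b) x = sc a x + sc b x" by (rule HH[THEN conjunct2, THEN conjunct2, THEN conjunct2, THEN conjunct1, rule_format])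
lemma ip_addl: "ip (x + y) z = ip x z + ip y z" by (rule HH[THEN conjunct2, THEN conjunct2, THEN conjunct2, THEN conjunct2, THEN conjunct1, rule_format])
lemma ip_scl: "ip (sc a x) y = a * ip x y" by (rule HH[THEN conjunct2, THEN conjunct2, THEN conjunct2, THEN conjunct2, THEN conjunct2, THEN conjunct1, rule_format])
lemma ip_cnj: "ip y x = cnj (ip x y)" by (rule HH[THEN conjunct2, THEN conjunct2, THEN conjunct2, THEN conjunct2, THEN conjunct2, THEN conjunct2, THEN conjunct1, rule_format])
lemma ip_im: "Im (ip x x) = 0" by (rule HH[THEN conjunct2, THEN conjunct2, THEN conjunct2, THEN conjunct2, THEN conjunct2, THEN conjunct2, THEN conjunct2, THEN conjunct1, rule_format, THEN conjunct1])
lemma ip_re: "Re (ip x x) \<ge> 0" by (rule HH[THEN conjunct2, THEN conjunct2, THEN conjunct2, THEN conjunct2, THEN conjunct2, THEN conjunct2, THEN conjunct2, THEN conjunct1, rule_format, THEN conjunct2])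
lemma ip_zero: "ip x x = 0 \<Longrightarrow> x = 0" by (rule HH[THEN conjunct2, THEN conjunct2, THEN conjunct2, THEN conjunct2, THEN conjunct2, THEN conjunct2, THEN conjunct2, THEN conjunct2, rule_format])

lemma complete0: "\<forall>u. (\<forall>e>0. \<exists>N. \<forall>i\<ge>N. \<forall>j\<ge>N. hnorm ip (u i - u j) < e)
          \<longrightarrow> (\<exists>l. (\<lambda>i. hnorm ip (u i - l)) \<longlonglongrightarrow> 0)"
  using H unfolding complex_hilbert_def by (elim conjE) assumption
lemma complete:
  assumes "\<forall>e>0. \<exists>N. \<forall>i\<ge>N. \<forall>j\<ge>N. hnorm ip (u i - u j) < e"
  shows "\<exists>l. (\<lambda>i. hnorm ip (u i - l)) \<longlonglongrightarrow> 0"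
  using mp[OF spec[OF complete0, of u] assms] .

lemma ip_0l[simp]: "ip 0 y = 0"
  using ip_addl[of 0 0 y] by simp
lemma ip_minusl: "ip (- x) y = - ip x y"
  using ip_addl[of x "-x" y] by (simp add: eq_neg_iff_add_eq_0 add.commute)
lemma ip_diffl: "ip (x - y) z = ip x z - ip y z"
  using ip_addl[of x "-y" z] ip_minusl[of y z] by simp
lemma ip_addr: "ip x (y + z) = ip x y + ip x z"
  by (metis ip_cnj ip_addl complex_cnj_add)
lemma ip_scr: "ip x (sc a y) = cnj a * ip x y"
  by (metis ip_cnj ip_scl complex_cnj_mult)
lemma ip_0r[simp]: "ip x 0 = 0"
  by (metis ip_0l ip_cnj complex_cnj_zero)
lemma ip_diffr: "ip x (y - z) = ip x y - ip x z"
  by (metis ip_cnj ip_diffl complex_cnj_diff)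
lemma sc_0l[simp]: "sc 0 x = 0"
  using sc_addl[of 0 0 x] by simp
lemma sc_0r[simp]: "sc a 0 = 0"
  using sc_addr[of a 0 0] by simp
lemma sc_m1: "sc (-1) x = - x"
  using sc_addl[of 1 "-1" x] sc1[of x] by (simp add: eq_neg_iff_add_eq_0 add.commute)

definition Q where "Q x = Re (ip x x)"
lemma Q_ge0: "Q x \<ge> 0" using ip_re Q_def by simp
lemma ipQ: "ip x x = complex_of_real (Q x)"
  using ip_im[of x] by (simp add: Q_def complex_eq_iff)
lemma hnormQ: "hnorm ip x = sqrt (Q x)" by (simp add: hnorm_def Q_def)
lemma hnorm_sq: "(hnorm ip x)^2 = Q x" using Q_ge0 by (simp add: hnormQ)
lemma Q0: "Q x = 0 \<Longrightarrow> x = 0" using ipQ ip_zero by simp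

lemma ip_expand: "ip (x + sc t y) (x + sc t y) =
   ip x x + cnj t * ip x y + t * cnj (ip x y) + t * cnj t * ip y y"
  by (simp add: ip_addl ip_addr ip_scl ip_scr algebra_simps ip_cnj[of x y])

lemma Q_expand: "Q (x + sc t y) = Q x + 2 * Re (cnj t * ip x y) + (cmod t)^2 * Q y"
proof -
  have "Q (x + sc t y) = Re (ip x x + cnj t * ip x y + t * cnj (ip x y) + t * cnj t * ip y y)"
    using ip_expand Q_def by simp
  also have "\<dots> = Q x + 2 * Re (cnj t * ip x y) + (cmod t)^2 * Q y"
  proof -
    have tt: "t * cnj t = complex_of_real ((cmod t)^2)" by (metis complex_norm_square)
    have a: "t * cnj t * ip y y = complex_of_real ((cmod t)^2 * Q y)"
      unfolding tt ipQ by simp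
    have b: "t * cnj (ip x y) = cnj (cnj t * ip x y)" by simp
    show ?thesis unfolding a b by (simp add: Q_def)
  qed
  finally show ?thesis .
qed

lemma CS: "cmod (ip x y) \<le> hnorm ip x * hnorm ip y"
proof (cases "Q y = 0")
  case True then show ?thesis using Q0[OF True] by (simp add: hnormQ)
next
  case False
  then have qy: "Q y > 0" using Q_ge0[of y] by linarith
  define t where "t = - ip x y / complex_of_real (Q y)"
  have "0 \<le> Q (x + sc t y)" by (rule Q_ge0)
  also have "\<dots> = Q x - (cmod (ip x y))^2 / Q y"
  proof -
    have ii: "cnj (ip x y) * ip x y = complex_of_real ((cmod (ip x y))^2)"
      by (metis complex_norm_square mult.commute)
    have a: "cnj t * ip x y = - complex_of_real ((cmod (ip x y))^2 / Q y)"
      unfolding t_def using ii by simp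
    have b: "(cmod t)^2 = (cmod (ip x y))^2 / (Q y)^2"
      using qy by (simp add: t_def norm_divide power_divide)
    show ?thesis unfolding Q_expand a b using qy by (simp add: power2_eq_square field_simps)
  qed
  finally have "(cmod (ip x y))^2 \<le> Q x * Q y" using qy by (simp add: field_simps)
  hence "sqrt ((cmod (ip x y))^2) \<le> sqrt (Q x * Q y)" by (rule real_sqrt_le_mono)
  thus ?thesis by (simp add: hnormQ real_sqrt_mult)
qed

lemma Q_0[simp]: "Q 0 = 0" using ipQ[of 0] by simp
lemma Q_sc: "Q (sc t y) = (cmod t)^2 * Q y"
  using Q_expand[of 0 t y] by simp
lemma parallelogram: "Q (a + b) + Q (a - b) = 2 * Q a + 2 * Q b"
  using Q_expand[of a 1 b] Q_expand[of a "-1" b] by (simp add: sc1 sc_m1)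
lemma Q_diff: "Q (a - b) = Q a - 2 * Re (ip a b) + Q b"
  using Q_expand[of a "-1" b] by (simp add: sc_m1)
end

locale rhs = chs +
  fixes D
  assumes D0: "0 \<in> D" and Dadd: "\<And>x y. x \<in> D \<Longrightarrow> y \<in> D \<Longrightarrow> x + y \<in> D"
    and Dsc: "\<And>a x. x \<in> D \<Longrightarrow> sc a x \<in> D"
    and dense: "\<And>x e. e > 0 \<Longrightarrow> \<exists>d\<in>D. hnorm ip (x - d) < e"
begin

lemma Ddiff: "x \<in> D \<Longrightarrow> y \<in> D \<Longrightarrow> x - y \<in> D"
  using Dadd[of x "sc (-1) y"] Dsc[of y "-1"] by (simp add: sc_m1)

lemma dense_zero:
  assumes "\<forall>x\<in>D. ip x w = 0" shows "w = 0"
proof -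
  have le: "Q w < e^2" if e0: "e > 0" for e
  proof -
    obtain d where d: "d \<in> D" "hnorm ip (w - d) < e" using dense[OF e0, of w] by blast
    have "ip w d = 0" using assms d ip_cnj[of d w] by simp
    hence "Q (w - d) = Q w + Q d" by (simp add: Q_diff)
    hence "Q w \<le> Q (w - d)" using Q_ge0[of d] by simp
    also have "Q (w - d) = (hnorm ip (w - d))^2" by (simp add: hnorm_sq)
    also have "\<dots> < e^2" using d(2) by (intro power_strict_mono) (auto simp: hnormQ Q_ge0)
    finally show ?thesis .
  qed
  have "Q w = 0"
  proof (rule ccontr)
    assume "Q w \<noteq> 0"
    hence "Q w > 0" using Q_ge0[of w] by simp
    hence "Q w < (sqrt (Q w))^2" using le[of "sqrt (Q w)"] by simp
    thus False using Q_ge0[of w] by simp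
  qed
  thus ?thesis by (rule Q0)
qed

lemma uniq_r: "\<forall>x\<in>D. ip x z = ip x z' \<Longrightarrow> z = z'"
  using dense_zero[of "z - z'"] by (simp add: ip_diffr)
lemma uniq_l: "\<forall>x\<in>D. ip z x = ip z' x \<Longrightarrow> z = z'"
  using dense_zero[of "z - z'"] by (simp add: ip_diffl ip_cnj[of _ "z - z'"] ip_cnj[of _ z] ip_cnj[of _ z'])


lemma riesz:
  fixes \<phi> :: "_ \<Rightarrow> complex"
  assumes add: "\<And>a b. a \<in> D \<Longrightarrow> b \<in> D \<Longrightarrow> \<phi> (a + b) = \<phi> a + \<phi> b"
    and scal: "\<And>a t. a \<in> D \<Longrightarrow> \<phi> (sc t a) = cnj t * \<phi> a"
    and bnd: "\<And>a. a \<in> D \<Longrightarrow> cmod (\<phi> a) \<le> C * hnorm ip a"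
  shows "\<exists>h. \<forall>k\<in>D. ip h k = \<phi> k"
proof -
  define C0 where "C0 = max C 0"
  have bnd0: "cmod (\<phi> a) \<le> C0 * hnorm ip a" if "a \<in> D" for a
  proof -
    have "0 \<le> hnorm ip a" by (simp add: hnormQ Q_ge0)
    hence "C * hnorm ip a \<le> C0 * hnorm ip a" unfolding C0_def by (intro mult_right_mono) auto
    thus ?thesis using bnd[OF that] by linarith
  qed
  define E where "E k = Q k - 2 * Re (\<phi> k)" for k
  have lower: "E k \<ge> - (C0 * C0)" if "k \<in> D" for k
  proof -
    define s where "s = hnorm ip k"
    have h1: "Re (\<phi> k) \<le> C0 * s" unfolding s_def using bnd0[OF that] complex_Re_le_cmod[of "\<phi> k"] by linarith
    have h2: "Q k = s * s" using s_def hnorm_sq by (simp add: power2_eq_square)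
    have h3: "s * s - 2 * (C0 * s) + C0 * C0 \<ge> 0"
      using zero_le_power2[of "s - C0"] by (simp add: power2_eq_square algebra_simps)
    show ?thesis unfolding E_def using h1 h2 h3 by linarith
  qed
  define I where "I = Inf (E ` D)"
  have ne: "E ` D \<noteq> {}" using D0 by blast
  have bdd: "bdd_below (E ` D)" using lower by (intro bdd_belowI[of _ "- (C0 * C0)"]) auto
  have Ile: "I \<le> E k" if "k \<in> D" for k
    unfolding I_def using bdd that by (simp add: cInf_lower)
  have "\<exists>d. d \<in> D \<and> E d < I + 1 / real (Suc n)" for n
  proof -
    have "Inf (E ` D) < I + 1 / real (Suc n)" unfolding I_def by simp
    from cInf_lessD[OF ne this] show ?thesis by blast
  qed
  then obtain d where dD: "\<And>n. d n \<in> D" and dE: "\<And>n. E (d n) < I + 1 / real (Suc n)"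
    by metis
  have phi_mid: "\<phi> (sc (1/2) (a + b)) = (\<phi> a + \<phi> b) / 2" if "a \<in> D" "b \<in> D" for a b
    using scal[OF Dadd[OF that], of "1/2"] add[OF that] by simp
  have mid: "Q (a - b) = 2 * E a + 2 * E b - 4 * E (sc (1/2) (a + b))" if "a \<in> D" "b \<in> D" for a b
  proof -
    have "E (sc (1/2) (a + b)) = Q (a + b) / 4 - Re (\<phi> a + \<phi> b)"
      unfolding E_def phi_mid[OF that] by (simp add: Q_sc power2_eq_square field_simps)
    thus ?thesis using parallelogram[of a b] unfolding E_def by simp
  qed
  have Qdd: "Q (d i - d j) < 2 / real (Suc i) + 2 / real (Suc j)" for i j
  proof -
    have "Q (d i - d j) = 2 * E (d i) + 2 * E (d j) - 4 * E (sc (1/2) (d i + d j))"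
      using mid dD by blast
    moreover have "I \<le> E (sc (1/2) (d i + d j))" using Ile Dsc Dadd dD by blast
    ultimately show ?thesis using dE[of i] dE[of j] by simp
  qed
  have cauchy: "\<forall>e>0. \<exists>N. \<forall>i\<ge>N. \<forall>j\<ge>N. hnorm ip (d i - d j) < e"
  proof (intro allI impI)
    fix e :: real assume e: "e > 0"
    obtain N where N: "4 / e^2 < real N" using reals_Archimedean2 by blast
    have "0 < e^2" using e by simp
    hence "4 < real N * e^2" using N by (simp add: pos_divide_less_eq)
    also have "\<dots> \<le> real (Suc N) * e^2" using \<open>0 < e^2\<close> by (intro mult_right_mono) auto
    finally have N': "4 / real (Suc N) < e^2" by (simp add: divide_less_eq mult.commute)
    show "\<exists>N. \<forall>i\<ge>N. \<forall>j\<ge>N. hnorm ip (d i - d j) < e"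
    proof (intro exI allI impI)
      fix i j assume ij: "N \<le> i" "N \<le> j"
      have "2 / real (Suc i) \<le> 2 / real (Suc N)" "2 / real (Suc j) \<le> 2 / real (Suc N)"
        using ij by (auto intro!: divide_left_mono)
      hence "Q (d i - d j) < e^2" using Qdd[of i j] N' by simp
      hence "sqrt (Q (d i - d j)) < sqrt (e^2)" by (rule real_sqrt_less_mono)
      thus "hnorm ip (d i - d j) < e" using e by (simp add: hnormQ)
    qed
  qed
  obtain h where h: "(\<lambda>i. hnorm ip (d i - h)) \<longlonglongrightarrow> 0" using complete[OF cauchy] by blast
  show ?thesis
  proof (intro exI ballI)
    fix k assume k: "k \<in> D"
    define z where "z = ip h k - \<phi> k"
    define q where "q = Q k"
    have q0: "q \<ge> 0" using Q_ge0 q_def by simp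
    have "(\<lambda>n. ip (d n - h) k) \<longlonglongrightarrow> 0"
    proof (rule Lim_null_comparison)
      show "\<forall>\<^sub>F n in sequentially. norm (ip (d n - h) k) \<le> hnorm ip (d n - h) * hnorm ip k"
        using CS by simp
      show "(\<lambda>n. hnorm ip (d n - h) * hnorm ip k) \<longlonglongrightarrow> 0"
        using tendsto_mult_left_zero[OF h] by simp
    qed
    hence "(\<lambda>n. ip (d n) k - ip h k) \<longlonglongrightarrow> 0" by (simp add: ip_diffl)
    hence conv: "(\<lambda>n. ip (d n) k) \<longlonglongrightarrow> ip h k" by (rule LIM_zero_cancel)
    have expand: "E (a + sc t k) = E a + 2 * Re (cnj t * (ip a k - \<phi> k)) + (cmod t)^2 * q"
      if "a \<in> D" for a t
      unfolding E_def q_def using Q_expand[of a t k] add[OF that Dsc[OF k]] scal[OF k]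
      by (simp add: algebra_simps)
    show "ip h k = \<phi> k"
    proof (rule ccontr)
      assume "ip h k \<noteq> \<phi> k"
      hence z0: "z \<noteq> 0" by (simp add: z_def)
      define t where "t = - z / complex_of_real (q + 1)"
      define L where "L = 2 * Re (cnj t * z) + (cmod t)^2 * q"
      have ge: "1 / real (Suc n) + (2 * Re (cnj t * (ip (d n) k - \<phi> k)) + (cmod t)^2 * q) \<ge> 0" for n
        using Ile[OF Dadd[OF dD[of n] Dsc[OF k, of t]]] expand[OF dD[of n], of t] dE[of n] by simp
      have "(\<lambda>n. 1 / real (Suc n) + (2 * Re (cnj t * (ip (d n) k - \<phi> k)) + (cmod t)^2 * q))
              \<longlonglongrightarrow> 0 + L"
        unfolding L_def z_def
        using LIMSEQ_Suc[OF lim_inverse_n'] by (intro tendsto_intros conv) simp_all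
      hence "0 \<le> 0 + L" using ge by (intro LIMSEQ_le_const) auto
      moreover have "L < 0"
      proof -
        have zz: "cnj z * z = complex_of_real ((cmod z)^2)" by (metis complex_norm_square mult.commute)
        define r where "r = (cmod z)^2"
        have r0: "r > 0" using z0 r_def by simp
        have q1: "q + 1 > 0" using q0 by simp
        have "cnj t * z = - complex_of_real (r / (q + 1))"
          unfolding t_def r_def using zz by simp
        hence c1: "Re (cnj t * z) = - (r / (q + 1))" by simp
        have c2: "(cmod t)^2 = r / (q + 1)^2"
          unfolding t_def r_def using q0 by (simp add: norm_divide power_divide)
        have "r / (q + 1)^2 * q = (r / (q + 1)) * (q / (q + 1))" by (simp add: power2_eq_square)
        also have "\<dots> \<le> (r / (q + 1)) * 1"
          using r0 q1 by (intro mult_left_mono) auto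
        finally have c3: "r / (q + 1)^2 * q \<le> r / (q + 1)" by simp
        have "r / (q + 1) > 0" using r0 q1 by simp
        thus ?thesis unfolding L_def c1 c2 using c3 by linarith
      qed
      ultimately show False by simp
    qed
  qed
qed

end

lemma meas_cnj[measurable]: "f \<in> borel_measurable M \<Longrightarrow> (\<lambda>x. cnj (f x :: complex)) \<in> borel_measurable M"
  by (rule measurable_compose[OF _ borel_measurable_continuous_onI[of cnj]]) (auto intro: continuous_intros)

locale fs = rhs sc ip D for sc ip D +
  fixes M :: "'x measure" and om th :: "'x \<Rightarrow> _ \<Rightarrow> complex"
  assumes th_add: "\<And>x a b. x \<in> space M \<Longrightarrow> a \<in> D \<Longrightarrow> b \<in> D \<Longrightarrow> th x (a + b) = th x a + th x b"
    and th_sc: "\<And>x a t. x \<in> space M \<Longrightarrow> a \<in> D \<Longrightarrow> th x (sc t a) = t * th x a"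
    and th_meas: "\<And>a. a \<in> D \<Longrightarrow> (\<lambda>x. th x a) \<in> borel_measurable M"
    and om_meas: "\<And>a. a \<in> D \<Longrightarrow> (\<lambda>x. om x a) \<in> borel_measurable M"
    and recon: "\<And>f g. f \<in> D \<Longrightarrow> g \<in> D \<Longrightarrow> integrable M (\<lambda>x. th x f * cnj (om x g)) \<and>
        ip f g = (LINT x|M. th x f * cnj (om x g))"
    and indep: "mu_independent D M om"
begin

lemma recon2:
  assumes "f \<in> D" "g \<in> D"
  shows "integrable M (\<lambda>x. om x f * cnj (th x g))" "ip f g = (LINT x|M. om x f * cnj (th x g))"
proof -
  have r: "integrable M (\<lambda>x. th x g * cnj (om x f))" "ip g f = (LINT x|M. th x g * cnj (om x f))"
    using recon[OF assms(2,1)] by auto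
  have eq: "(\<lambda>x. om x f * cnj (th x g)) = (\<lambda>x. cnj (th x g * cnj (om x f)))" by (simp add: mult.commute)
  show "integrable M (\<lambda>x. om x f * cnj (th x g))" unfolding eq by (rule integrable_cnj[OF r(1)])
  show "ip f g = (LINT x|M. om x f * cnj (th x g))"
    unfolding eq Bochner_Integration.integral_cnj r(2)[symmetric] by (rule ip_cnj)
qed

lemma mult_prop:
  assumes dom: "mult_dom ip D M m om th = D" and f: "f \<in> D"
  shows "\<forall>g\<in>D. ip (mult_op ip D M m om th f) g = (LINT x|M. m x * om x f * cnj (th x g))"
proof -
  have fd: "f \<in> mult_dom ip D M m om th" using dom f by simp
  then obtain C where intg: "\<And>g. g \<in> D \<Longrightarrow> integrable M (\<lambda>x. m x * om x f * cnj (th x g))"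
    and C: "\<And>g. g \<in> D \<Longrightarrow> cmod (LINT x|M. m x * om x f * cnj (th x g)) \<le> C * hnorm ip g"
    unfolding mult_dom_def by blast
  define \<phi> where "\<phi> g = (LINT x|M. m x * om x f * cnj (th x g))" for g
  have "\<exists>h. \<forall>k\<in>D. ip h k = \<phi> k"
  proof (rule riesz)
    fix a b assume ab: "a \<in> D" "b \<in> D"
    have "\<phi> (a + b) = (LINT x|M. m x * om x f * cnj (th x a) + m x * om x f * cnj (th x b))"
      unfolding \<phi>_def by (rule Bochner_Integration.integral_cong) (auto simp: th_add ab algebra_simps)
    also have "\<dots> = \<phi> a + \<phi> b" unfolding \<phi>_def using intg ab by simp
    finally show "\<phi> (a + b) = \<phi> a + \<phi> b" .
  next
    fix a t assume a: "a \<in> D"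
    have "\<phi> (sc t a) = (LINT x|M. cnj t * (m x * om x f * cnj (th x a)))"
      unfolding \<phi>_def by (rule Bochner_Integration.integral_cong) (auto simp: th_sc a algebra_simps)
    also have "\<dots> = cnj t * \<phi> a" unfolding \<phi>_def by simp
    finally show "\<phi> (sc t a) = cnj t * \<phi> a" .
  next
    fix a assume "a \<in> D" thus "cmod (\<phi> a) \<le> C * hnorm ip a" unfolding \<phi>_def by (rule C)
  qed
  then obtain h where h: "\<forall>k\<in>D. ip h k = \<phi> k" by blast
  have "mult_op ip D M m om th f = h"
    unfolding mult_op_def
  proof (rule the_equality)
    show "\<forall>g\<in>D. ip h g = (LINT x|M. m x * om x f * cnj (th x g))" using h \<phi>_def by simp
    fix h' assume "\<forall>g\<in>D. ip h' g = (LINT x|M. m x * om x f * cnj (th x g))"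
    thus "h' = h" using h \<phi>_def by (intro uniq_l) simp
  qed
  thus ?thesis using h \<phi>_def by simp
qed

lemma adj_prop:
  assumes L: "in_Ldagger ip D Adom A" and y: "y \<in> D"
  shows "adjoint_op ip Adom A y \<in> D" "\<forall>x\<in>D. ip (A x) y = ip x (adjoint_op ip Adom A y)"
proof -
  have Ad: "Adom = D" and sub: "D \<subseteq> adjoint_dom ip Adom A" and inD: "\<forall>f\<in>D. adjoint_op ip Adom A f \<in> D"
    using L unfolding in_Ldagger_def by auto
  show "adjoint_op ip Adom A y \<in> D" using inD y by blast
  obtain z where z: "\<forall>x\<in>Adom. ip (A x) y = ip x z" using sub y unfolding adjoint_dom_def by blast
  have "adjoint_op ip Adom A y = z" unfolding adjoint_op_def
  proof (rule the_equality)
    show "\<forall>x\<in>Adom. ip (A x) y = ip x z" by (rule z)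
    fix z' assume "\<forall>x\<in>Adom. ip (A x) y = ip x z'"
    thus "z' = z" using z Ad by (intro uniq_r) simp
  qed
  thus "\<forall>x\<in>D. ip (A x) y = ip x (adjoint_op ip Adom A y)" using z Ad by simp
qed

lemma T_prop:
  assumes dom: "mult_dom ip D M m om th = D"
    and L: "in_Ldagger ip D (mult_dom ip D M m om th) (mult_op ip D M m om th)"
    and mm: "m \<in> borel_measurable M" and k: "k \<in> D"
  shows "AE x in M. th x (adjoint_op ip (mult_dom ip D M m om th) (mult_op ip D M m om th) k)
      = cnj (m x) * th x k"
proof -
  define k' where "k' = adjoint_op ip (mult_dom ip D M m om th) (mult_op ip D M m om th) k"
  have k': "k' \<in> D" and adj: "\<forall>x\<in>D. ip (mult_op ip D M m om th x) k = ip x k'"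
    using adj_prop[OF L k] k'_def by auto
  define \<xi> where "\<xi> x = m x * cnj (th x k) - cnj (th x k')" for x
  have "AE x in M. \<xi> x = 0"
  proof -
    have "\<xi> \<in> borel_measurable M" unfolding \<xi>_def using th_meas[OF k] th_meas[OF k'] mm by measurable
    moreover have "integrable M (\<lambda>x. \<xi> x * om x g) \<and> (LINT x|M. \<xi> x * om x g) = 0" if g: "g \<in> D" for g
    proof -
      have eq: "(\<lambda>x. \<xi> x * om x g) = (\<lambda>x. m x * om x g * cnj (th x k) - om x g * cnj (th x k'))"
        unfolding \<xi>_def by (auto simp: algebra_simps)
      have i1: "integrable M (\<lambda>x. m x * om x g * cnj (th x k))"
        using g k dom unfolding mult_dom_def by blast
      have i2: "integrable M (\<lambda>x. om x g * cnj (th x k'))" using recon2[OF g k'] by simp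
      have "(LINT x|M. m x * om x g * cnj (th x k)) = ip (mult_op ip D M m om th g) k"
        using mult_prop[OF dom g] k by simp
      moreover have "(LINT x|M. om x g * cnj (th x k')) = ip g k'" using recon2[OF g k'] by simp
      ultimately show ?thesis unfolding eq using i1 i2 adj g by simp
    qed
    ultimately show ?thesis using indep unfolding mu_independent_def by blast
  qed
  note ae = this
  have pt: "th x k' = cnj (m x) * th x k" if "\<xi> x = 0" for x
  proof -
    have "cnj (th x k') = m x * cnj (th x k)" using that unfolding \<xi>_def by simp
    hence "cnj (cnj (th x k')) = cnj (m x * cnj (th x k))" by simp
    thus "th x k' = cnj (m x) * th x k" by simp
  qed
  have "AE x in M. th x k' = cnj (m x) * th x k"
    using ae by (rule AE_mp) (auto intro!: AE_I2 pt)
  thus ?thesis unfolding k'_def .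
qed

end
theorem proposition5p2:
  fixes sc :: "complex \<Rightarrow> 'h::ab_group_add \<Rightarrow> 'h"
    and ip :: "'h \<Rightarrow> 'h \<Rightarrow> complex"
    and D :: "'h set"
    and p :: "nat \<Rightarrow> 'h \<Rightarrow> real"
    and M :: "'x measure"
    and om th :: "'x \<Rightarrow> 'h \<Rightarrow> complex"
    and m1 m2 :: "'x \<Rightarrow> complex"
  assumes "rigged_reflexive_frechet sc ip D p"
    and "sigma_finite_measure M"
    and "riesz_distribution_basis sc ip D p M om"
    and "dual_frame sc ip D p M om th"
    and "m1 \<in> borel_measurable M"
    and "m2 \<in> borel_measurable M"
    and "in_Ldagger ip D (mult_dom ip D M m1 om th) (mult_op ip D M m1 om th)"
    and "in_Ldagger ip D (mult_dom ip D M m2 om th) (mult_op ip D M m2 om th)"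
  shows "\<forall>f\<in>D. f \<in> mult_dom ip D M (\<lambda>x. m1 x * m2 x) om th \<and>
           mult_op ip D M m1 om th (mult_op ip D M m2 om th f) =
           mult_op ip D M (\<lambda>x. m1 x * m2 x) om th f"
proof -
  have R1: "complex_hilbert sc ip"
    using assms(1) unfolding rigged_reflexive_frechet_def by (elim conjE) assumption
  have R2: "0 \<in> D"
    using assms(1) unfolding rigged_reflexive_frechet_def by (elim conjE) assumption
  have R3: "\<forall>x\<in>D. \<forall>y\<in>D. x + y \<in> D"
    using assms(1) unfolding rigged_reflexive_frechet_def by (elim conjE) assumption
  have R4: "\<forall>a. \<forall>x\<in>D. sc a x \<in> D"
    using assms(1) unfolding rigged_reflexive_frechet_def by (elim conjE) assumption
  have R5: "\<forall>x. \<forall>e>0. \<exists>d\<in>D. hnorm ip (x - d) < e"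
    using assms(1) unfolding rigged_reflexive_frechet_def by (elim conjE) assumption
  note R = R1 R2 R3 R4 R5
  interpret rhs sc ip D
  proof unfold_locales
    show "complex_hilbert sc ip" by (rule R(1))
    show "0 \<in> D" by (rule R(2))
  next
    fix x y assume "x \<in> D" "y \<in> D" thus "x + y \<in> D" using R(3) by blast
  next
    fix a x assume "x \<in> D" thus "sc a x \<in> D" using R(4) by blast
  next
    fix x and e :: real assume "e > 0" thus "\<exists>d\<in>D. hnorm ip (x - d) < e" using R(5) by blast
  qed
  have omf: "weakly_meas sc D p M om"
    using assms(3) unfolding riesz_distribution_basis_def distribution_frame_def by (elim conjE) assumption
  have ind: "mu_independent D M om"
    using assms(3) unfolding riesz_distribution_basis_def distribution_frame_def by (elim conjE) assumption
  have thf: "weakly_meas sc D p M th"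
    using assms(4) unfolding dual_frame_def distribution_frame_def by (elim conjE) assumption
  have rc: "\<forall>f\<in>D. \<forall>g\<in>D. integrable M (\<lambda>x. th x f * cnj (om x g)) \<and>
        ip f g = (LINT x|M. th x f * cnj (om x g))"
    using assms(4) unfolding dual_frame_def distribution_frame_def by (elim conjE) assumption
  interpret fs sc ip D M om th
  proof (unfold_locales)
    fix x a b assume "x \<in> space M" "a \<in> D" "b \<in> D"
    thus "th x (a + b) = th x a + th x b" using thf unfolding weakly_meas_def dual_space_def by blast
  next
    fix x a t assume "x \<in> space M" "a \<in> D"
    thus "th x (sc t a) = t * th x a" using thf unfolding weakly_meas_def dual_space_def by blast
  next
    fix a assume "a \<in> D" thus "(\<lambda>x. th x a) \<in> borel_measurable M" using thf unfolding weakly_meas_def by blast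
  next
    fix a assume "a \<in> D" thus "(\<lambda>x. om x a) \<in> borel_measurable M" using omf unfolding weakly_meas_def by blast
  next
    fix f g assume "f \<in> D" "g \<in> D" thus "integrable M (\<lambda>x. th x f * cnj (om x g)) \<and>
        ip f g = (LINT x|M. th x f * cnj (om x g))" using rc by blast
  next
    show "mu_independent D M om" by (rule ind)
  qed
  define A1 where "A1 = mult_op ip D M m1 om th"
  define A2 where "A2 = mult_op ip D M m2 om th"
  define B1 where "B1 = adjoint_op ip (mult_dom ip D M m1 om th) A1"
  define B2 where "B2 = adjoint_op ip (mult_dom ip D M m2 om th) A2"
  have d1: "mult_dom ip D M m1 om th = D" using assms(7) unfolding in_Ldagger_def by blast
  have d2: "mult_dom ip D M m2 om th = D" using assms(8) unfolding in_Ldagger_def by blast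
  have A2D: "\<And>f. f \<in> D \<Longrightarrow> A2 f \<in> D" using assms(8) unfolding in_Ldagger_def A2_def by blast
  have adj1: "\<And>y. y \<in> D \<Longrightarrow> B1 y \<in> D \<and> (\<forall>x\<in>D. ip (A1 x) y = ip x (B1 y))"
    using adj_prop[OF assms(7)] unfolding A1_def B1_def by blast
  have adj2: "\<And>y. y \<in> D \<Longrightarrow> B2 y \<in> D \<and> (\<forall>x\<in>D. ip (A2 x) y = ip x (B2 y))"
    using adj_prop[OF assms(8)] unfolding A2_def B2_def by blast
  have T1: "\<And>k. k \<in> D \<Longrightarrow> AE x in M. th x (B1 k) = cnj (m1 x) * th x k"
    using T_prop[OF d1 assms(7) assms(5)] unfolding B1_def A1_def by blast
  have T2: "\<And>k. k \<in> D \<Longrightarrow> AE x in M. th x (B2 k) = cnj (m2 x) * th x k"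
    using T_prop[OF d2 assms(8) assms(6)] unfolding B2_def A2_def by blast
  show ?thesis
  proof (intro ballI)
    fix f assume f: "f \<in> D"
    define h where "h = A1 (A2 f)"
    have key: "integrable M (\<lambda>x. (m1 x * m2 x) * om x f * cnj (th x g)) \<and>
       ip h g = (LINT x|M. (m1 x * m2 x) * om x f * cnj (th x g))" if g: "g \<in> D" for g
    proof -
      have k1: "B1 g \<in> D" using adj1[OF g] by blast
      have k: "B2 (B1 g) \<in> D" using adj2[OF k1] by blast
      have "ip h g = ip (A2 f) (B1 g)" unfolding h_def using adj1[OF g] A2D[OF f] by blast
      also have "\<dots> = ip f (B2 (B1 g))" using adj2[OF k1] f by blast
      also have "\<dots> = (LINT x|M. om x f * cnj (th x (B2 (B1 g))))" using recon2[OF f k] by simp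
      finally have e1: "ip h g = (LINT x|M. om x f * cnj (th x (B2 (B1 g))))" .
      have ae: "AE x in M. om x f * cnj (th x (B2 (B1 g))) = (m1 x * m2 x) * om x f * cnj (th x g)"
        using T2[OF k1] T1[OF g] by eventually_elim simp
      have meas1: "(\<lambda>x. om x f * cnj (th x (B2 (B1 g)))) \<in> borel_measurable M"
        using om_meas[OF f] th_meas[OF k] by measurable
      have meas2: "(\<lambda>x. (m1 x * m2 x) * om x f * cnj (th x g)) \<in> borel_measurable M"
        using om_meas[OF f] th_meas[OF g] assms(5,6) by measurable
      show ?thesis
        using integrable_cong_AE_imp[OF recon2(1)[OF f k] meas2 ae] integral_cong_AE[OF meas1 meas2 ae] e1
        by simp
    qed
    have fdom: "f \<in> mult_dom ip D M (\<lambda>x. m1 x * m2 x) om th"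
      unfolding mult_dom_def
    proof (intro CollectI conjI ballI exI[of _ "hnorm ip h"])
      show "f \<in> D" by (rule f)
      fix g assume "g \<in> D"
      thus "integrable M (\<lambda>x. m1 x * m2 x * om x f * cnj (th x g))" using key by blast
    next
      fix g assume "g \<in> D"
      thus "cmod (LINT x|M. m1 x * m2 x * om x f * cnj (th x g)) \<le> hnorm ip h * hnorm ip g"
        using key CS[of h g] by metis
    qed
    have "mult_op ip D M (\<lambda>x. m1 x * m2 x) om th f = h"
      unfolding mult_op_def
    proof (rule the_equality)
      show "\<forall>g\<in>D. ip h g = (LINT x|M. m1 x * m2 x * om x f * cnj (th x g))" using key by blast
      fix h' assume "\<forall>g\<in>D. ip h' g = (LINT x|M. m1 x * m2 x * om x f * cnj (th x g))"
      thus "h' = h" using key by (intro uniq_l) simp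
    qed
    thus "f \<in> mult_dom ip D M (\<lambda>x. m1 x * m2 x) om th \<and>
           mult_op ip D M m1 om th (mult_op ip D M m2 om th f) =
           mult_op ip D M (\<lambda>x. m1 x * m2 x) om th f"
      using fdom unfolding h_def A1_def A2_def by simp
  qed
qed

end
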